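(* A graph $G$ (without isolated vertices) is $2$-$\gamma_{\rm tg}$-critical if and only if $G$ is a complete graph $K_n$ with $n \ge 2$.
   Context: Total domination game on a graph without isolated vertices: Dominator and Staller alternately choose vertices, each chosen vertex must be adjacent to some vertex not yet totally dominated; the game ends when no legal move exists; Dominator minimizes, Staller maximizes the number of moves; $\gamma_{\rm tg}(G)$ is the number of moves in the Dominator-start game under optimal play. $G|v$ is $G$ with $v$ declared already totally dominated, with $\gamma_{\rm tg}(G|v)$ defined analogously. $G$ is $\gamma_{\rm tg}$-critical if $\gamma_{\rm tg}(G|v)<\gamma_{\rm tg}(G)$ for every vertex $v$, and $k$-$\gamma_{\rm tg}$-critical if moreover $\gamma_{\rm tg}(G)=k$. *)

theory Defs
  imports Main
begin

definition simple_graph :: "'a set \<Rightarrow> ('a \<Rightarrow> 'a \<Rightarrow> bool) \<Rightarrow> bool" where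
  "simple_graph V E \<longleftrightarrow> finite V \<and> (\<forall>x y. E x y \<longrightarrow> x \<in> V \<and> y \<in> V)
     \<and> (\<forall>x y. E x y \<longrightarrow> E y x) \<and> (\<forall>x. \<not> E x x)"

definition no_isolated :: "'a set \<Rightarrow> ('a \<Rightarrow> 'a \<Rightarrow> bool) \<Rightarrow> bool" where
  "no_isolated V E \<longleftrightarrow> (\<forall>v\<in>V. \<exists>u. E v u)"

definition nbhd :: "('a \<Rightarrow> 'a \<Rightarrow> bool) \<Rightarrow> 'a \<Rightarrow> 'a set" where
  "nbhd E u = {w. E u w}"

text \<open>Legal moves when D is the set of vertices already totally dominated: a vertex u
  whose open neighbourhood contains a vertex not yet totally dominated.\<close>
definition legal_moves :: "'a set \<Rightarrow> ('a \<Rightarrow> 'a \<Rightarrow> bool) \<Rightarrow> 'a set \<Rightarrow> 'a set" where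
  "legal_moves V E D = {u \<in> V. \<not> nbhd E u \<subseteq> D}"

text \<open>Optimal number of remaining moves, with a fuel parameter k bounding the recursion
  depth (each move strictly enlarges D \<subseteq> V, so fuel card V suffices).
  The boolean is True when Dominator (minimiser) is to move.\<close>
fun tg_val :: "'a set \<Rightarrow> ('a \<Rightarrow> 'a \<Rightarrow> bool) \<Rightarrow> nat \<Rightarrow> bool \<Rightarrow> 'a set \<Rightarrow> nat" where
  "tg_val V E 0 d D = 0"
| "tg_val V E (Suc k) d D =
     (if legal_moves V E D = {} then 0
      else if d then Min ((\<lambda>u. Suc (tg_val V E k False (D \<union> nbhd E u))) ` legal_moves V E D)
      else Max ((\<lambda>u. Suc (tg_val V E k True (D \<union> nbhd E u))) ` legal_moves V E D))"

definition gamma_tg :: "'a set \<Rightarrow> ('a \<Rightarrow> 'a \<Rightarrow> bool) \<Rightarrow> nat" where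
  "gamma_tg V E = tg_val V E (card V) True {}"

text \<open>gamma_tg(G|v): v is declared already totally dominated.\<close>
definition gamma_tg_pre :: "'a set \<Rightarrow> ('a \<Rightarrow> 'a \<Rightarrow> bool) \<Rightarrow> 'a \<Rightarrow> nat" where
  "gamma_tg_pre V E v = tg_val V E (card V) True {v}"

definition tg_critical :: "'a set \<Rightarrow> ('a \<Rightarrow> 'a \<Rightarrow> bool) \<Rightarrow> bool" where
  "tg_critical V E \<longleftrightarrow> (\<forall>v\<in>V. gamma_tg_pre V E v < gamma_tg V E)"

definition k_tg_critical :: "nat \<Rightarrow> 'a set \<Rightarrow> ('a \<Rightarrow> 'a \<Rightarrow> bool) \<Rightarrow> bool" where
  "k_tg_critical k V E \<longleftrightarrow> tg_critical V E \<and> gamma_tg V E = k"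

definition complete_graph :: "'a set \<Rightarrow> ('a \<Rightarrow> 'a \<Rightarrow> bool) \<Rightarrow> bool" where
  "complete_graph V E \<longleftrightarrow> (\<forall>x\<in>V. \<forall>y\<in>V. x \<noteq> y \<longrightarrow> E x y)"

end

theory Submission
  imports Defs
begin

lemma tg_zero: "legal_moves V E D = {} \<Longrightarrow> tg_val V E k d D = 0"
  by (cases k) auto

lemma legal_fin: "finite V \<Longrightarrow> finite (legal_moves V E D)"
  unfolding legal_moves_def by auto

lemma legal_full: "simple_graph V E \<Longrightarrow> V \<subseteq> D \<Longrightarrow> legal_moves V E D = {}"
  unfolding legal_moves_def simple_graph_def nbhd_def by blast

lemma tg_pos:
  assumes "finite V" "legal_moves V E D \<noteq> {}"
  shows "tg_val V E (Suc k) d D \<noteq> 0"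
proof -
  have f: "finite (legal_moves V E D)" using assms(1) by (rule legal_fin)
  show ?thesis
  proof (cases d)
    case True
    have "Min ((\<lambda>u. Suc (tg_val V E k False (D \<union> nbhd E u))) ` legal_moves V E D)
          \<in> (\<lambda>u. Suc (tg_val V E k False (D \<union> nbhd E u))) ` legal_moves V E D"
      using f assms(2) by (intro Min_in) auto
    then show ?thesis using True assms(2) by auto
  next
    case False
    have "Max ((\<lambda>u. Suc (tg_val V E k True (D \<union> nbhd E u))) ` legal_moves V E D)
          \<in> (\<lambda>u. Suc (tg_val V E k True (D \<union> nbhd E u))) ` legal_moves V E D"
      using f assms(2) by (intro Max_in) auto
    then show ?thesis using False assms(2) by auto
  qed
qed

theorem proposition4p1:
  fixes V :: "'a set" and E :: "'a \<Rightarrow> 'a \<Rightarrow> bool"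
  assumes "simple_graph V E" and "no_isolated V E"
  shows "k_tg_critical 2 V E \<longleftrightarrow> (complete_graph V E \<and> card V \<ge> 2)"
proof
  have fin: "finite V" using assms(1) unfolding simple_graph_def by blast
  have inV: "\<And>x y. E x y \<Longrightarrow> x \<in> V \<and> y \<in> V" using assms(1) unfolding simple_graph_def by blast
  have sym: "\<And>x y. E x y \<Longrightarrow> E y x" using assms(1) unfolding simple_graph_def by blast
  have irr: "\<And>x. \<not> E x x" using assms(1) unfolding simple_graph_def by blast
  have ni: "\<And>v. v \<in> V \<Longrightarrow> \<exists>u. E v u" using assms(2) unfolding no_isolated_def by blast
  {
    assume A: "k_tg_critical 2 V E"
    have g2: "gamma_tg V E = 2" and cr: "\<And>v. v \<in> V \<Longrightarrow> gamma_tg_pre V E v < 2"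
      using A unfolding k_tg_critical_def tg_critical_def by auto
    have "card V \<noteq> 0" using g2 unfolding gamma_tg_def by (cases "card V") auto
    then obtain v where v: "v \<in> V" using fin by fastforce
    obtain w where w: "E v w" using ni[OF v] by blast
    have "card {v, w} \<le> card V" using v inV[OF w] fin by (intro card_mono) auto
    moreover have "v \<noteq> w" using w irr by auto
    ultimately have c2: "card V \<ge> 2" by simp
    then obtain k where k: "card V = Suc (Suc k)" by (metis add_2_eq_Suc le_Suc_ex)
    have "complete_graph V E"
      unfolding complete_graph_def
    proof (intro ballI impI)
      fix x y assume x: "x \<in> V" and y: "y \<in> V" and xy: "x \<noteq> y"
      obtain x' where x': "E x x'" using ni[OF x] by blast
      have xl: "x \<in> legal_moves V E {x}" using x x' irr unfolding legal_moves_def nbhd_def by auto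
      let ?f = "\<lambda>u. Suc (tg_val V E (Suc k) False ({x} \<union> nbhd E u))"
      have "gamma_tg_pre V E x = Min (?f ` legal_moves V E {x})"
        unfolding gamma_tg_pre_def k using xl by auto
      moreover have "Min (?f ` legal_moves V E {x}) \<in> ?f ` legal_moves V E {x}"
        using xl legal_fin[OF fin] by (intro Min_in) auto
      ultimately obtain u where u: "u \<in> legal_moves V E {x}"
        and "?f u < 2" using cr[OF x] by auto
      then have "tg_val V E (Suc k) False ({x} \<union> nbhd E u) = 0" by simp
      then have L: "legal_moves V E ({x} \<union> nbhd E u) = {}" using tg_pos fin by blast
      have uV: "u \<in> V" using u unfolding legal_moves_def by auto
      have cov: "\<And>z. z \<in> V \<Longrightarrow> z \<in> {x} \<union> nbhd E u"
      proof -
        fix z assume z: "z \<in> V"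
        obtain z' where "E z z'" using ni[OF z] by blast
        then have "E z' z" "z' \<in> V" using sym inV by auto
        then show "z \<in> {x} \<union> nbhd E u" using L unfolding legal_moves_def nbhd_def by blast
      qed
      have "u = x" using cov[OF uV] irr unfolding nbhd_def by auto
      then show "E x y" using cov[OF y] xy unfolding nbhd_def by auto
    qed
    then show "complete_graph V E \<and> card V \<ge> 2" using c2 by blast
  }
  {
    assume B: "complete_graph V E \<and> card V \<ge> 2"
    have cp: "\<And>x y. x \<in> V \<Longrightarrow> y \<in> V \<Longrightarrow> x \<noteq> y \<Longrightarrow> E x y"
      using B unfolding complete_graph_def by blast
    obtain k where k: "card V = Suc (Suc k)" using B by (metis add_2_eq_Suc le_Suc_ex)
    have other: "\<And>u. u \<in> V \<Longrightarrow> \<exists>w\<in>V. w \<noteq> u"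
    proof -
      fix u assume "u \<in> V"
      show "\<exists>w\<in>V. w \<noteq> u"
      proof (rule ccontr)
        assume "\<not> ?thesis"
        then have "V \<subseteq> {u}" by auto
        then have "card V \<le> 1" using card_mono[of "{u}" V] by auto
        then show False using k by simp
      qed
    qed
    have nb: "\<And>u. u \<in> V \<Longrightarrow> nbhd E u = V - {u}"
      unfolding nbhd_def using cp inV irr by blast
    have l0: "legal_moves V E {} = V"
      unfolding legal_moves_def nbhd_def using ni by auto
    have Vne: "V \<noteq> {}" using k by auto
    have inner: "\<And>u. u \<in> V \<Longrightarrow> tg_val V E (Suc k) False ({} \<union> nbhd E u) = 1"
    proof -
      fix u assume u: "u \<in> V"
      have lu: "legal_moves V E (nbhd E u) = V - {u}"
        unfolding legal_moves_def using nb u irr cp inV unfolding nbhd_def by blast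
      have ne: "V - {u} \<noteq> {}" using other[OF u] by auto
      have "\<And>w. w \<in> V - {u} \<Longrightarrow> tg_val V E k True (nbhd E u \<union> nbhd E w) = 0"
        using nb u by (intro tg_zero legal_full[OF assms(1)]) auto
      then have "(\<lambda>w. Suc (tg_val V E k True (nbhd E u \<union> nbhd E w))) ` (V - {u}) = {1}"
        using ne by auto
      then show "tg_val V E (Suc k) False ({} \<union> nbhd E u) = 1" using lu ne by simp
    qed
    have "(\<lambda>u. Suc (tg_val V E (Suc k) False ({} \<union> nbhd E u))) ` V = {2}"
      using inner Vne by auto
    then have g: "gamma_tg V E = 2" unfolding gamma_tg_def k using l0 Vne by simp
    have "\<And>v. v \<in> V \<Longrightarrow> gamma_tg_pre V E v < 2"
    proof -
      fix x assume x: "x \<in> V"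
      obtain y where y: "y \<in> V" "y \<noteq> x" using other[OF x] by blast
      have xl: "x \<in> legal_moves V E {x}" using cp[OF x y(1)] y unfolding legal_moves_def nbhd_def
        using x by auto
      let ?f = "\<lambda>u. Suc (tg_val V E (Suc k) False ({x} \<union> nbhd E u))"
      have "{x} \<union> nbhd E x = V" using nb[OF x] x by auto
      then have "?f x = 1" using tg_zero[OF legal_full[OF assms(1)]] by (metis One_nat_def order_refl)
      moreover have "Min (?f ` legal_moves V E {x}) \<le> ?f x"
        using xl legal_fin[OF fin] by (intro Min_le) auto
      moreover have "gamma_tg_pre V E x = Min (?f ` legal_moves V E {x})"
        unfolding gamma_tg_pre_def k using xl by auto
      ultimately show "gamma_tg_pre V E x < 2" by simp
    qed
    then show "k_tg_critical 2 V E" using g unfolding k_tg_critical_def tg_critical_def by simp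
  }
qed

end
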